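(* Let $p\in\mathbb{C}[x]$ of degree $n\ge2$ have $k\ge2$ distinct roots, let $\hat z_1,\dots,\hat z_n\in\mathbb{C}$ with $\|p-p_n\prod_j(x-\hat z_j)\|_1\le 2^{-b}\|p\|_1$, and assume $b\ge b_0$, where $b_0$ is the smallest integer that is a power of two, is at least $\max(8n,n\log n)$, and for all $i=1,\dots,k$ satisfies $$2^{-b/(2m_i)}\le\tfrac{1}{2n^2},\quad 2^{-b/(2m_i)}\le\tfrac{\sigma_i}{2n},\quad 2^{-b/2}\le\tfrac{|P_i|}{16(n+1)2^{\tau_p}M(z_i)^n},$$ $$2^{-b/(2m_i)}<\min\Big(\big(\tfrac{\sigma_i}{4n}\big)^8,\tfrac{\sigma_i}{1024n^2}\Big),\quad 2^{-b/8}<\min\Big(\tfrac1{16},\tfrac{|P_i|}{(n+1)2^{2n\Gamma_p+8n}}\Big).$$ Let $Z_i$ denote the set of those $\hat z_j$ lying in $\Delta(z_i,2^{-b/(2m_i)})$. Then for $i\ne j$, $\hat z\in Z_i$ and $\hat z'\in Z_j$, $$|\hat z-\hat z'|\ge 2\big(2^{-b/(16m_i)}+2^{-b/(16m_j)}\big).$$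
   Context: Logarithms base 2; $M(x)=\max(1,|x|)$; $\Delta(z,r)$ closed disk. $p=\sum_ip_ix^i=p_n\prod_{j=1}^k(x-z_j)^{m_j}$ with distinct roots $z_j$, multiplicities $m_j$; $\|p\|_1=\sum|p_i|$; $\tau_p$ smallest non-negative integer with $|p_i|/|p_n|\le 2^{\tau_p}$ for $i<n$; $\Gamma_p:=\max(1,\max_j\log|z_j|)$; $\sigma_i:=\min_{j\ne i}|z_i-z_j|$; $P_i:=\prod_{j\ne i}(z_i-z_j)^{m_j}$. *)

theory Defs
  imports "HOL-Analysis.Analysis" "HOL-Computational_Algebra.Polynomial"
begin

definition roots_of :: "complex poly \<Rightarrow> complex set" where
  "roots_of p = {z. poly p z = 0}"

definition norm1 :: "complex poly \<Rightarrow> real" where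
  "norm1 q = (\<Sum>i\<le>degree q. cmod (coeff q i))"

definition Mfun :: "complex \<Rightarrow> real" where
  "Mfun x = max 1 (cmod x)"

definition tau :: "complex poly \<Rightarrow> nat" where
  "tau p = (LEAST t::nat. \<forall>i<degree p. cmod (coeff p i) / cmod (lead_coeff p) \<le> 2 ^ t)"

text \<open>Gamma_p = max(1, max_j log2 |z_j|); zero roots contribute log 0 = -infinity, hence are omitted.\<close>
definition Gamma :: "complex poly \<Rightarrow> real" where
  "Gamma p = Max (insert 1 {log 2 (cmod z) | z. z \<in> roots_of p \<and> z \<noteq> 0})"

definition sep :: "complex poly \<Rightarrow> complex \<Rightarrow> real" where
  "sep p z = Min {cmod (z - w) | w. w \<in> roots_of p \<and> w \<noteq> z}"

definition Pfac :: "complex poly \<Rightarrow> complex \<Rightarrow> complex" where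
  "Pfac p z = (\<Prod>w\<in>roots_of p - {z}. (z - w) ^ order w p)"

definition b0_cond :: "complex poly \<Rightarrow> nat \<Rightarrow> bool" where
  "b0_cond p b \<longleftrightarrow>
     (let n = degree p in
     (\<exists>e::nat. b = 2 ^ e) \<and>
     real b \<ge> max (8 * real n) (real n * log 2 (real n)) \<and>
     (\<forall>z\<in>roots_of p. let m = real (order z p); \<sigma> = sep p z in
        2 powr (- real b / (2 * m)) \<le> 1 / (2 * real n ^ 2) \<and>
        2 powr (- real b / (2 * m)) \<le> \<sigma> / (2 * real n) \<and>
        2 powr (- real b / 2) \<le> cmod (Pfac p z) /
             (16 * (real n + 1) * 2 ^ tau p * Mfun z ^ n) \<and>
        2 powr (- real b / (2 * m)) < min ((\<sigma> / (4 * real n)) ^ 8) (\<sigma> / (1024 * real n ^ 2)) \<and>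
        2 powr (- real b / 8) < min (1 / 16)
             (cmod (Pfac p z) / ((real n + 1) * 2 powr (2 * real n * Gamma p + 8 * real n)))))"

definition b0 :: "complex poly \<Rightarrow> nat" where
  "b0 p = (LEAST b. b0_cond p b)"

definition Zset :: "complex poly \<Rightarrow> (nat \<Rightarrow> complex) \<Rightarrow> nat \<Rightarrow> complex \<Rightarrow> complex set" where
  "Zset p zh b z = {zh j | j. j \<in> {1..degree p} \<and>
       zh j \<in> cball z (2 powr (- real b / (2 * real (order z p))))}"

end

theory Submission
  imports Defs
begin

lemma ev_powr:
  assumes "0 < c" "0 < K"
  shows "eventually (\<lambda>b::nat. 2 powr (- real b / c) < K) sequentially"
proof -
  have "eventually (\<lambda>b::nat. real b > - c * log 2 K) sequentially"
    by (rule eventually_gt_at_top[of "nat \<lceil>- c * log 2 K\<rceil>", THEN eventually_mono]) linarith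
  then show ?thesis
  proof (rule eventually_mono)
    fix b :: nat assume h: "real b > - c * log 2 K"
    have "- real b / c < log 2 K" using h assms by (simp add: field_simps)
    then have "2 powr (- real b / c) < 2 powr (log 2 K)" by simp
    then show "2 powr (- real b / c) < K" using assms by simp
  qed
qed

lemma ev_powr_le:
  assumes "0 < c" "0 < K"
  shows "eventually (\<lambda>b::nat. 2 powr (- real b / c) \<le> K) sequentially"
  using ev_powr[OF assms] by (rule eventually_mono) simp

lemma powr_anti:
  assumes "0 < c" "a \<le> b"
  shows "2 powr (- real b / c) \<le> 2 powr (- real a / c)"
  using assms by (intro powr_mono) (auto simp: divide_right_mono)

lemma sep_facts:
  assumes "p \<noteq> 0" "z \<in> roots_of p" "w \<in> roots_of p" "w \<noteq> z"
  shows "sep p z \<le> cmod (z - w)" "0 < sep p z"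
proof -
  have fr: "finite (roots_of p)" using assms(1) poly_roots_finite unfolding roots_of_def by blast
  have fin: "finite {cmod (z - w) | w. w \<in> roots_of p \<and> w \<noteq> z}"
    by (rule finite_image_set) (use fr in auto)
  show "sep p z \<le> cmod (z - w)" unfolding sep_def
    by (rule Min_le[OF fin]) (use assms in auto)
  have ne: "{cmod (z - w) | w. w \<in> roots_of p \<and> w \<noteq> z} \<noteq> {}" using assms by auto
  have "sep p z \<in> {cmod (z - w) | w. w \<in> roots_of p \<and> w \<noteq> z}"
    unfolding sep_def by (rule Min_in[OF fin ne])
  then show "0 < sep p z" by auto
qed

lemma b0_exists:
  assumes "degree p \<ge> 2" "card (roots_of p) \<ge> 2"
  shows "\<exists>b. b0_cond p b"
proof -
  define n where "n = degree p"
  have p0: "p \<noteq> 0" using assms by auto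
  have fr: "finite (roots_of p)" using p0 poly_roots_finite unfolding roots_of_def by blast
  have n2: "real n \<ge> 2" using assms n_def by simp
  have ord: "real (order z p) \<ge> 1" if "z \<in> roots_of p" for z
    using that p0 order_root[of p z] unfolding roots_of_def by auto
  have other: "\<exists>w\<in>roots_of p. w \<noteq> z" if "z \<in> roots_of p" for z
  proof (rule ccontr)
    assume "\<not> ?thesis"
    then have "roots_of p \<subseteq> {z}" by auto
    then have "card (roots_of p) \<le> 1" using card_mono[of "{z}" "roots_of p"] by simp
    then show False using assms by simp
  qed
  have sp: "0 < sep p z" if "z \<in> roots_of p" for z
    using other[OF that] sep_facts(2)[OF p0 that] by auto
  have Pf: "Pfac p z \<noteq> 0" if "z \<in> roots_of p" for z
    unfolding Pfac_def using fr by (auto simp: prod_zero_iff)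
  have M: "Mfun z > 0" for z unfolding Mfun_def by simp
  define Q where "Q = (\<lambda>z (b::nat). let m = real (order z p); \<sigma> = sep p z in
        2 powr (- real b / (2 * m)) \<le> 1 / (2 * real n ^ 2) \<and>
        2 powr (- real b / (2 * m)) \<le> \<sigma> / (2 * real n) \<and>
        2 powr (- real b / 2) \<le> cmod (Pfac p z) /
             (16 * (real n + 1) * 2 ^ tau p * Mfun z ^ n) \<and>
        2 powr (- real b / (2 * m)) < min ((\<sigma> / (4 * real n)) ^ 8) (\<sigma> / (1024 * real n ^ 2)) \<and>
        2 powr (- real b / 8) < min (1 / 16)
             (cmod (Pfac p z) / ((real n + 1) * 2 powr (2 * real n * Gamma p + 8 * real n))))"
  have ev: "\<forall>z\<in>roots_of p. eventually (Q z) sequentially"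
  proof
    fix z assume z: "z \<in> roots_of p"
    have m: "0 < 2 * real (order z p)" using ord[OF z] by simp
    have s: "0 < sep p z" using sp[OF z] .
    have P: "0 < cmod (Pfac p z)" using Pf[OF z] by simp
    show "eventually (Q z) sequentially" unfolding Let_def Q_def
      using ev_powr_le[OF m, of "1 / (2 * real n ^ 2)"]
        ev_powr_le[OF m, of "sep p z / (2 * real n)"]
        ev_powr_le[of 2 "cmod (Pfac p z) / (16 * (real n + 1) * 2 ^ tau p * Mfun z ^ n)"]
        ev_powr[OF m, of "min ((sep p z / (4 * real n)) ^ 8) (sep p z / (1024 * real n ^ 2))"]
        ev_powr[of 8 "min (1 / 16) (cmod (Pfac p z) / ((real n + 1) * 2 powr (2 * real n * Gamma p + 8 * real n)))"]
      using n2 s P M[of z]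
      by (intro eventually_conj) (auto intro!: divide_pos_pos mult_pos_pos)
  qed
  have ev2: "eventually (\<lambda>b::nat. real b \<ge> max (8 * real n) (real n * log 2 (real n))) sequentially"
    by (rule eventually_ge_at_top[of "nat \<lceil>max (8 * real n) (real n * log 2 (real n))\<rceil>", THEN eventually_mono]) linarith
  from eventually_conj[OF eventually_ball_finite[OF fr ev] ev2]
  obtain N where N: "\<And>b. b \<ge> N \<Longrightarrow> (\<forall>z\<in>roots_of p. Q z b) \<and>
        real b \<ge> max (8 * real n) (real n * log 2 (real n))"
    unfolding eventually_sequentially by blast
  have "N \<le> 2 ^ N" by (simp add: less_imp_le)
  from N[OF this] have "b0_cond p (2 ^ N)" unfolding b0_cond_def n_def Q_def Let_def by auto
  then show ?thesis by blast
qed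

theorem lemma9:
  fixes p :: "complex poly" and zh :: "nat \<Rightarrow> complex" and b :: nat
  assumes "degree p \<ge> 2"
    and "card (roots_of p) \<ge> 2"
    and "norm1 (p - smult (lead_coeff p) (\<Prod>j\<in>{1..degree p}. [:- zh j, 1:]))
           \<le> 2 powr (- real b) * norm1 p"
    and "b \<ge> b0 p"
    and "zi \<in> roots_of p" and "zj \<in> roots_of p" and "zi \<noteq> zj"
    and "w \<in> Zset p zh b zi" and "w' \<in> Zset p zh b zj"
  shows "cmod (w - w') \<ge> 2 * (2 powr (- real b / (16 * real (order zi p)))
                               + 2 powr (- real b / (16 * real (order zj p))))"
proof -
  define n where "n = degree p"
  define d where "d = cmod (zi - zj)"
  have p0: "p \<noteq> 0" using assms by auto
  have n2: "real n \<ge> 2" using assms n_def by simp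
  have c: "b0_cond p (b0 p)" unfolding b0_def using b0_exists[OF assms(1,2)] by (metis LeastI)
  have key: "2 powr (- real b / (2 * real (order z p))) \<le> d / 4 \<and>
             2 * 2 powr (- real b / (16 * real (order z p))) < d / 4"
    if z: "z \<in> roots_of p" and dz: "sep p z \<le> d" for z
  proof -
    define m where "m = real (order z p)"
    have m1: "m \<ge> 1" using z p0 order_root[of p z] unfolding roots_of_def m_def by auto
    have s0: "0 \<le> sep p z"
    proof -
      have "0 < 2 powr (- real (b0 p) / (2 * m))" by simp
      moreover have "2 powr (- real (b0 p) / (2 * m)) \<le> sep p z / (2 * real n)"
        using c z unfolding b0_cond_def Let_def n_def m_def by auto
      ultimately show ?thesis using n2 by (smt (verit) divide_nonpos_pos)
    qed
    have cz: "2 powr (- real (b0 p) / (2 * m)) \<le> sep p z / (2 * real n) \<and>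
        2 powr (- real (b0 p) / (2 * m)) < (sep p z / (4 * real n)) ^ 8"
      using c z unfolding b0_cond_def Let_def n_def m_def by auto
    have mo: "2 powr (- real b / (2 * m)) \<le> 2 powr (- real (b0 p) / (2 * m))"
      using powr_anti[of "2*m" "b0 p" b] m1 assms(4) by simp
    have a1: "2 powr (- real b / (2 * m)) \<le> sep p z / (2 * real n)"
      using cz mo by linarith
    have a2: "2 powr (- real b / (2 * m)) < (sep p z / (4 * real n)) ^ 8"
      using cz mo by linarith
    have eq: "(2 powr (- real b / (16 * m))) ^ 8 = 2 powr (- real b / (2 * m))"
      by (simp add: powr_power)
    have A: "2 powr (- real b / (16 * m)) < sep p z / (4 * real n)"
    proof (rule power_less_imp_less_base[of _ 8])
      show "(2 powr (- real b / (16 * m))) ^ 8 < (sep p z / (4 * real n)) ^ 8" using a2 eq by simp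
      show "0 \<le> sep p z / (4 * real n)" using s0 n2 by simp
    qed
    have "sep p z / (2 * real n) \<le> sep p z / 4"
      by (rule divide_left_mono) (use s0 n2 in auto)
    moreover have "sep p z / (4 * real n) \<le> sep p z / 8"
      by (rule divide_left_mono) (use s0 n2 in auto)
    ultimately have dd: "sep p z / (2 * real n) \<le> d / 4" "sep p z / (4 * real n) \<le> d / 8"
      using dz by linarith+
    show ?thesis using a1 A dd unfolding m_def by linarith
  qed
  have ki: "2 powr (- real b / (2 * real (order zi p))) \<le> d / 4 \<and>
             2 * 2 powr (- real b / (16 * real (order zi p))) < d / 4"
    using key[OF assms(5)] sep_facts(1)[OF p0 assms(5,6)] assms(7) d_def by auto
  have kj: "2 powr (- real b / (2 * real (order zj p))) \<le> d / 4 \<and>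
             2 * 2 powr (- real b / (16 * real (order zj p))) < d / 4"
    using key[OF assms(6)] sep_facts(1)[OF p0 assms(6,5)] assms(7) d_def
    by (auto simp: norm_minus_commute)
  have wi: "cmod (zi - w) \<le> 2 powr (- real b / (2 * real (order zi p)))"
    using assms(8) unfolding Zset_def by (auto simp: dist_norm)
  have wj: "cmod (zj - w') \<le> 2 powr (- real b / (2 * real (order zj p)))"
    using assms(9) unfolding Zset_def by (auto simp: dist_norm)
  have "d \<le> cmod (zi - w) + cmod (w - w') + cmod (w' - zj)"
  proof -
    have "zi - zj = (zi - w) + (w - w') + (w' - zj)" by simp
    then have "d = cmod ((zi - w) + (w - w') + (w' - zj))" unfolding d_def by simp
    also have "\<dots> \<le> cmod ((zi - w) + (w - w')) + cmod (w' - zj)" by (rule norm_triangle_ineq)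
    also have "\<dots> \<le> cmod (zi - w) + cmod (w - w') + cmod (w' - zj)" using norm_triangle_ineq[of "zi - w" "w - w'"] by simp
    finally show ?thesis .
  qed
  then show ?thesis using ki kj wi wj by (simp add: norm_minus_commute)
qed

end
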